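(* Let $A$ and $B$ be $\Bbbk$-algebras admitting normalized nearly Frobenius coproducts $\Delta_A$ and $\Delta_B$. Then (1) $C=A\times B$ admits a normalized nearly Frobenius coproduct, namely the one determined by $\Delta(1_C)=\sum(a_1,0)\otimes(a_2,0)+\sum(0,b_1)\otimes(0,b_2)$ where $\Delta_A(1_A)=\sum a_1\otimes a_2$ and $\Delta_B(1_B)=\sum b_1\otimes b_2$; and (2) $D=A\otimes B$ admits a normalized nearly Frobenius coproduct, namely $\Delta_D=\tau\circ(\Delta_A\otimes\Delta_B)$, where $\tau:(A\otimes A)\otimes(B\otimes B)\to(A\otimes B)\otimes(A\otimes B)$ is the transposition $a\otimes a'\otimes b\otimes b'\mapsto a\otimes b\otimes a'\otimes b'$.
   Context: Algebras are associative and unital over a field $\Bbbk$, tensor products over $\Bbbk$, $m$ denotes multiplication. A nearly Frobenius coproduct on $A$ is a $\Bbbk$-linear map $\Delta:A\to A\otimes A$ with $\Delta\circ m=(1\otimes m)\circ(\Delta\otimes 1)=(m\otimes 1)\circ(1\otimes\Delta)$ (an $A$-bimodule morphism). It is normalized if $m\circ\Delta=\operatorname{Id}_A$. *)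

theory Defs
  imports Main "HOL.Vector_Spaces" "HOL-Library.Product_Plus"
begin

text \<open>Vector spaces over a field 'k are types of class ab_group_add with a scalar
 multiplication s satisfying vector_space s (locale of HOL.Vector_Spaces).\<close>

definition kalg :: "('k::field \<Rightarrow> 'a::ab_group_add \<Rightarrow> 'a) \<Rightarrow> ('a \<Rightarrow> 'a \<Rightarrow> 'a) \<Rightarrow> 'a \<Rightarrow> bool" where
  "kalg s m u \<longleftrightarrow> vector_space s
     \<and> (\<forall>x. Vector_Spaces.linear s s (m x)) \<and> (\<forall>y. Vector_Spaces.linear s s (\<lambda>x. m x y))
     \<and> (\<forall>x y z. m (m x y) z = m x (m y z))
     \<and> (\<forall>x. m u x = x \<and> m x u = x)"

text \<open>(sT, t) is a tensor product of the k-vector spaces (sV) and (sW):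
 t is bilinear, its image spans T, and every bilinear form V x W -> k factors through
 a Vector_Spaces.linear form on T (equivalent, given spanning, to the usual universal property).\<close>

definition is_tensor :: "('k::field \<Rightarrow> 'v::ab_group_add \<Rightarrow> 'v) \<Rightarrow> ('k \<Rightarrow> 'w::ab_group_add \<Rightarrow> 'w)
     \<Rightarrow> ('k \<Rightarrow> 't::ab_group_add \<Rightarrow> 't) \<Rightarrow> ('v \<Rightarrow> 'w \<Rightarrow> 't) \<Rightarrow> bool" where
  "is_tensor sV sW sT t \<longleftrightarrow> vector_space sV \<and> vector_space sW \<and> vector_space sT
     \<and> (\<forall>w. Vector_Spaces.linear sV sT (\<lambda>v. t v w)) \<and> (\<forall>v. Vector_Spaces.linear sW sT (t v))
     \<and> module.span sT {t v w | v w. True} = UNIV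
     \<and> (\<forall>\<phi> :: 'v \<Rightarrow> 'w \<Rightarrow> 'k.
          (\<forall>w. Vector_Spaces.linear sV (*) (\<lambda>v. \<phi> v w)) \<and> (\<forall>v. Vector_Spaces.linear sW (*) (\<phi> v))
          \<longrightarrow> (\<exists>f. Vector_Spaces.linear sT (*) f \<and> (\<forall>v w. f (t v w) = \<phi> v w)))"

definition tensor_map :: "('k::field \<Rightarrow> 't1::ab_group_add \<Rightarrow> 't1) \<Rightarrow> ('k \<Rightarrow> 't2::ab_group_add \<Rightarrow> 't2)
     \<Rightarrow> ('v1 \<Rightarrow> 'w1 \<Rightarrow> 't1) \<Rightarrow> ('v2 \<Rightarrow> 'w2 \<Rightarrow> 't2) \<Rightarrow> ('v1 \<Rightarrow> 'v2) \<Rightarrow> ('w1 \<Rightarrow> 'w2) \<Rightarrow> 't1 \<Rightarrow> 't2" where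
  "tensor_map s1 s2 t1 t2 f g =
     (THE h. Vector_Spaces.linear s1 s2 h \<and> (\<forall>a b. h (t1 a b) = t2 (f a) (g b)))"

definition tensor_mult :: "('k::field \<Rightarrow> 't::ab_group_add \<Rightarrow> 't) \<Rightarrow> ('k \<Rightarrow> 'a::ab_group_add \<Rightarrow> 'a)
     \<Rightarrow> ('a \<Rightarrow> 'a \<Rightarrow> 't) \<Rightarrow> ('a \<Rightarrow> 'a \<Rightarrow> 'a) \<Rightarrow> 't \<Rightarrow> 'a" where
  "tensor_mult sT sA t m = (THE h. Vector_Spaces.linear sT sA h \<and> (\<forall>a b. h (t a b) = m a b))"

text \<open>Nearly Frobenius coproduct: Vector_Spaces.linear and Delta o m = (1 \<otimes> m) o (Delta \<otimes> 1) = (m \<otimes> 1) o (1 \<otimes> Delta),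
 written on pure tensors a \<otimes> b (both sides are Vector_Spaces.linear on A \<otimes> A, which is spanned by pure tensors).\<close>
definition nearly_frobenius :: "('k::field \<Rightarrow> 'a::ab_group_add \<Rightarrow> 'a) \<Rightarrow> ('a \<Rightarrow> 'a \<Rightarrow> 'a)
     \<Rightarrow> ('k \<Rightarrow> 't::ab_group_add \<Rightarrow> 't) \<Rightarrow> ('a \<Rightarrow> 'a \<Rightarrow> 't) \<Rightarrow> ('a \<Rightarrow> 't) \<Rightarrow> bool" where
  "nearly_frobenius sA m sT t \<Delta> \<longleftrightarrow> Vector_Spaces.linear sA sT \<Delta>
     \<and> (\<forall>a b. \<Delta> (m a b) = tensor_map sT sT t t id (\<lambda>y. m y b) (\<Delta> a))
     \<and> (\<forall>a b. \<Delta> (m a b) = tensor_map sT sT t t (m a) id (\<Delta> b))"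

definition normalized_nearly_frobenius :: "('k::field \<Rightarrow> 'a::ab_group_add \<Rightarrow> 'a) \<Rightarrow> ('a \<Rightarrow> 'a \<Rightarrow> 'a)
     \<Rightarrow> ('k \<Rightarrow> 't::ab_group_add \<Rightarrow> 't) \<Rightarrow> ('a \<Rightarrow> 'a \<Rightarrow> 't) \<Rightarrow> ('a \<Rightarrow> 't) \<Rightarrow> bool" where
  "normalized_nearly_frobenius sA m sT t \<Delta> \<longleftrightarrow> nearly_frobenius sA m sT t \<Delta>
     \<and> (\<forall>a. tensor_mult sT sA t m (\<Delta> a) = a)"

definition prod_scale :: "('k \<Rightarrow> 'a \<Rightarrow> 'a) \<Rightarrow> ('k \<Rightarrow> 'b \<Rightarrow> 'b) \<Rightarrow> 'k \<Rightarrow> 'a \<times> 'b \<Rightarrow> 'a \<times> 'b" where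
  "prod_scale sA sB c p = (sA c (fst p), sB c (snd p))"

definition prod_mult :: "('a \<Rightarrow> 'a \<Rightarrow> 'a) \<Rightarrow> ('b \<Rightarrow> 'b \<Rightarrow> 'b) \<Rightarrow> 'a \<times> 'b \<Rightarrow> 'a \<times> 'b \<Rightarrow> 'a \<times> 'b" where
  "prod_mult mA mB p q = (mA (fst p) (fst q), mB (snd p) (snd q))"

definition tensor_transpose :: "('k::field \<Rightarrow> 'p::ab_group_add \<Rightarrow> 'p) \<Rightarrow> ('k \<Rightarrow> 'dd::ab_group_add \<Rightarrow> 'dd)
     \<Rightarrow> ('aa \<Rightarrow> 'bb \<Rightarrow> 'p) \<Rightarrow> ('a \<Rightarrow> 'a \<Rightarrow> 'aa) \<Rightarrow> ('b \<Rightarrow> 'b \<Rightarrow> 'bb) \<Rightarrow> ('a \<Rightarrow> 'b \<Rightarrow> 'd)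
     \<Rightarrow> ('d \<Rightarrow> 'd \<Rightarrow> 'dd) \<Rightarrow> 'p \<Rightarrow> 'dd" where
  "tensor_transpose sP sDD tP tA tB tD tDD =
     (THE h. Vector_Spaces.linear sP sDD h \<and>
        (\<forall>a a' b b'. h (tP (tA a a') (tB b b')) = tDD (tD a b) (tD a' b')))"

end

theory Submission
  imports Defs
begin


lemma vs_field: "vector_space ((*) :: 'k::field \<Rightarrow> 'k \<Rightarrow> 'k)"
  unfolding vector_space_def by (auto simp: algebra_simps)

lemma lin_add: "Vector_Spaces.linear s1 s2 f \<Longrightarrow> f (x + y) = f x + f y"
  by (simp add: linear_iff)
lemma lin_scale: "Vector_Spaces.linear s1 s2 f \<Longrightarrow> f (s1 c x) = s2 c (f x)"
  by (simp add: linear_iff)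
lemma lin_vs1: "Vector_Spaces.linear s1 s2 f \<Longrightarrow> vector_space s1"
  by (simp add: linear_iff)
lemma lin_vs2: "Vector_Spaces.linear s1 s2 f \<Longrightarrow> vector_space s2"
  by (simp add: linear_iff)
lemma lin_zero: "Vector_Spaces.linear s1 s2 f \<Longrightarrow> f 0 = 0"
  by (metis add_cancel_right_right add_0 lin_add)
lemma lin_diff: "Vector_Spaces.linear s1 s2 f \<Longrightarrow> f (x - y) = f x - f y"
  by (metis add_diff_cancel diff_add_cancel lin_add)
lemma linI: "vector_space s1 \<Longrightarrow> vector_space s2 \<Longrightarrow> (\<And>x y. f (x + y) = f x + f y)
  \<Longrightarrow> (\<And>c x. f (s1 c x) = s2 c (f x)) \<Longrightarrow> Vector_Spaces.linear s1 s2 f"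
  by (simp add: linear_iff)
lemma lin_comp: "Vector_Spaces.linear s1 s2 f \<Longrightarrow> Vector_Spaces.linear s2 s3 g
   \<Longrightarrow> Vector_Spaces.linear s1 s3 (\<lambda>x. g (f x))"
  using Vector_Spaces.linear_compose[of s1 s2 f s3 g] by (simp add: o_def)
lemma vs_add: "vector_space s \<Longrightarrow> s c (x + y) = s c x + s c y"
  by (simp add: vector_space_def)
lemma vs_diff: "vector_space s \<Longrightarrow> s c (x - y) = s c x - s c y"
  by (metis add_diff_cancel diff_add_cancel vs_add)
lemma vs_scale: "vector_space s \<Longrightarrow> s c (s d x) = s d (s c x)"
  by (simp add: vector_space_def mult.commute)
lemma lin_addf: "Vector_Spaces.linear s1 s2 f \<Longrightarrow> Vector_Spaces.linear s1 s2 g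
   \<Longrightarrow> Vector_Spaces.linear s1 s2 (\<lambda>x. f x + g x)"
  apply (rule linI)
  apply (auto simp: lin_vs1 lin_vs2 lin_add lin_scale vs_add[OF lin_vs2] add_ac)
  done
lemma lin_subf: "Vector_Spaces.linear s1 s2 f \<Longrightarrow> Vector_Spaces.linear s1 s2 g
   \<Longrightarrow> Vector_Spaces.linear s1 s2 (\<lambda>x. f x - g x)"
  apply (rule linI)
  apply (auto simp: lin_vs1 lin_vs2 lin_add lin_scale vs_diff[OF lin_vs2] add_ac)
  done
lemma lin_scalef: "Vector_Spaces.linear s1 s2 f
   \<Longrightarrow> Vector_Spaces.linear s1 s2 (\<lambda>x. s2 c (f x))"
  apply (rule linI)
  apply (auto simp: lin_vs1 lin_vs2 lin_add lin_scale vs_add[OF lin_vs2] vs_scale[OF lin_vs2])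
  done
lemma lin_id: "vector_space s \<Longrightarrow> Vector_Spaces.linear s s (\<lambda>x. x)"
  by (rule linI) auto
lemma lin_id': "vector_space s \<Longrightarrow> Vector_Spaces.linear s s id"
  by (rule linI) auto
lemma vs_zero: "vector_space s \<Longrightarrow> s c 0 = 0"
  by (metis add_cancel_right_right add_0 vs_add)
lemma lin_const0: "vector_space s1 \<Longrightarrow> vector_space s2 \<Longrightarrow> Vector_Spaces.linear s1 s2 (\<lambda>x. 0)"
  by (rule linI) (auto simp: vs_zero)

lemma sep:
  assumes X: "vector_space s" and L: "\<And>l. Vector_Spaces.linear s (*) l \<Longrightarrow> l x = 0"
  shows "x = 0"
proof (rule ccontr)
  assume "x \<noteq> 0"
  interpret P: vector_space_pair s "(*)" using X vs_field by (simp add: vector_space_pair_def)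
  have "P.vs1.independent {x}" using \<open>x \<noteq> 0\<close> by simp
  from P.linear_independent_extend[OF this, of "\<lambda>_. 1"] obtain g where
    "Vector_Spaces.linear s (*) g" "g x = 1" by auto
  with L show False by force
qed

lemma lin_eq_span:
  assumes f: "Vector_Spaces.linear s1 s2 f" and g: "Vector_Spaces.linear s1 s2 g"
    and sp: "module.span s1 G = UNIV" and eq: "\<And>x. x \<in> G \<Longrightarrow> f x = g x"
  shows "f = g"
proof
  fix x
  interpret P: vector_space_pair s1 s2 using f lin_vs1 lin_vs2 by (simp add: vector_space_pair_def) blast
  have "x \<in> module.span s1 G" using sp by simp
  then show "f x = g x" using P.linear_eq_on[OF f g, of x G] eq by blast
qed

lemma tensor_ext:
  assumes T: "is_tensor sV sW sT t" and h1: "Vector_Spaces.linear sT sX h1"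
    and h2: "Vector_Spaces.linear sT sX h2" and eq: "\<And>v w. h1 (t v w) = h2 (t v w)"
  shows "h1 = h2"
  by (rule lin_eq_span[OF h1 h2, of "{t v w |v w. True}"]) (use T eq in \<open>auto simp: is_tensor_def\<close>)

lemma bilin_ext:
  assumes sp1: "module.span s1 G1 = UNIV" and sp2: "module.span s2 G2 = UNIV"
    and a1: "\<And>y. Vector_Spaces.linear s1 sX (\<lambda>x. p1 x y)" and b1: "\<And>x. Vector_Spaces.linear s2 sX (p1 x)"
    and a2: "\<And>y. Vector_Spaces.linear s1 sX (\<lambda>x. p2 x y)" and b2: "\<And>x. Vector_Spaces.linear s2 sX (p2 x)"
    and eq: "\<And>x y. x \<in> G1 \<Longrightarrow> y \<in> G2 \<Longrightarrow> p1 x y = p2 x y"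
  shows "p1 x y = p2 x y"
proof -
  have "(\<lambda>x. p1 x y) = (\<lambda>x. p2 x y)" if "y \<in> G2" for y
    by (rule lin_eq_span[OF a1 a2 sp1]) (use eq that in auto)
  then have "p1 x = p2 x" by (intro lin_eq_span[OF b1 b2 sp2]) meson
  then show ?thesis by simp
qed

lemma tensor_univ:
  fixes sT :: "'k::field \<Rightarrow> 't::ab_group_add \<Rightarrow> 't"
  assumes T: "is_tensor sV sW sT t" and X: "vector_space sX"
    and l1: "\<And>w. Vector_Spaces.linear sV sX (\<lambda>v. \<phi> v w)"
    and l2: "\<And>v. Vector_Spaces.linear sW sX (\<phi> v)"
  shows "\<exists>h. Vector_Spaces.linear sT sX h \<and> (\<forall>v w. h (t v w) = \<phi> v w)"
proof -
  let ?G = "{t v w |v w. True}"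
  from T have vT: "vector_space sT" and sp: "module.span sT ?G = UNIV"
    and tl1: "\<And>w. Vector_Spaces.linear sV sT (\<lambda>v. t v w)"
    and tl2: "\<And>v. Vector_Spaces.linear sW sT (t v)"
    and UP: "\<And>\<psi> :: _ \<Rightarrow> _ \<Rightarrow> 'k. (\<forall>w. Vector_Spaces.linear sV (*) (\<lambda>v. \<psi> v w)) \<and> (\<forall>v. Vector_Spaces.linear sW (*) (\<psi> v))
          \<Longrightarrow> (\<exists>f. Vector_Spaces.linear sT (*) f \<and> (\<forall>v w. f (t v w) = \<psi> v w))"
    unfolding is_tensor_def by auto
  interpret TT: vector_space sT by fact
  interpret P: vector_space_pair sT sX using vT X by (simp add: vector_space_pair_def)
  interpret Q: vector_space_pair sT "(*)" using vT vs_field by (simp add: vector_space_pair_def)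
  obtain B where B: "B \<subseteq> ?G" "TT.independent B" "?G \<subseteq> TT.span B"
    by (rule TT.maximal_independent_subset)
  have spB: "TT.span B = UNIV"
    using sp TT.span_minimal[OF B(3) TT.subspace_span] by auto
  define pk where "pk b = (SOME p. b = t (fst p) (snd p))" for b
  have pk: "b = t (fst (pk b)) (snd (pk b))" if "b \<in> B" for b
  proof -
    from that B(1) obtain v w where "b = t v w" by auto
    then have "\<exists>p. b = t (fst p) (snd p)" by (intro exI[of _ "(v,w)"]) simp
    then show ?thesis unfolding pk_def by (rule someI_ex)
  qed
  define h where "h = P.construct B (\<lambda>b. \<phi> (fst (pk b)) (snd (pk b)))"
  have hl: "Vector_Spaces.linear sT sX h" unfolding h_def by (rule P.linear_construct[OF B(2)])
  have hB: "h b = \<phi> (fst (pk b)) (snd (pk b))" if "b \<in> B" for b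
    unfolding h_def by (rule P.construct_basis[OF B(2) that])
  have "h (t v w) = \<phi> v w" for v w
  proof -
    have "h (t v w) - \<phi> v w = 0"
    proof (rule sep[OF X])
      fix l assume l: "Vector_Spaces.linear sX (*) l"
      have "\<exists>f. Vector_Spaces.linear sT (*) f \<and> (\<forall>v w. f (t v w) = l (h (t v w) - \<phi> v w))"
        by (rule UP) (auto intro!: lin_comp[OF _ l] lin_subf lin_comp[OF _ hl] tl1 tl2 l1 l2)
      then obtain f where f: "Vector_Spaces.linear sT (*) f" "\<And>v w. f (t v w) = l (h (t v w) - \<phi> v w)"
        by blast
      have "f = (\<lambda>_. 0)"
      proof (rule lin_eq_span[OF f(1) lin_const0[OF vT vs_field] spB])
        fix b assume b: "b \<in> B"
        have "f b = l (h b - \<phi> (fst (pk b)) (snd (pk b)))"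
          using f(2)[of "fst (pk b)" "snd (pk b)"] pk[OF b] by simp
        also have "\<dots> = 0" using hB[OF b] lin_zero[OF l] by simp
        finally show "f b = 0" .
      qed
      then show "l (h (t v w) - \<phi> v w) = 0" using f(2)[of v w] by simp
    qed
    then show ?thesis by simp
  qed
  with hl show ?thesis by blast
qed

lemma tensor_the:
  assumes T: "is_tensor sV sW sT t" and X: "vector_space sX"
    and l1: "\<And>w. Vector_Spaces.linear sV sX (\<lambda>v. \<phi> v w)"
    and l2: "\<And>v. Vector_Spaces.linear sW sX (\<phi> v)"
  shows "Vector_Spaces.linear sT sX (THE h. Vector_Spaces.linear sT sX h \<and> (\<forall>v w. h (t v w) = \<phi> v w))
     \<and> (\<forall>v w. (THE h. Vector_Spaces.linear sT sX h \<and> (\<forall>v w. h (t v w) = \<phi> v w)) (t v w) = \<phi> v w)"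
proof -
  from tensor_univ[OF T X l1 l2] obtain h where h: "Vector_Spaces.linear sT sX h" "\<forall>v w. h (t v w) = \<phi> v w"
    by blast
  have "\<exists>!h. Vector_Spaces.linear sT sX h \<and> (\<forall>v w. h (t v w) = \<phi> v w)"
  proof (rule ex1I[of _ h])
    show "Vector_Spaces.linear sT sX h \<and> (\<forall>v w. h (t v w) = \<phi> v w)" using h by blast
    fix g assume "Vector_Spaces.linear sT sX g \<and> (\<forall>v w. g (t v w) = \<phi> v w)"
    then show "g = h" using tensor_ext[OF T _ h(1)] h(2) by auto
  qed
  from theI'[OF this] show ?thesis .
qed

lemma tmap:
  assumes T1: "is_tensor sV1 sW1 s1 t1" and T2: "is_tensor sV2 sW2 s2 t2"
    and f: "Vector_Spaces.linear sV1 sV2 f" and g: "Vector_Spaces.linear sW1 sW2 g"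
  shows "Vector_Spaces.linear s1 s2 (tensor_map s1 s2 t1 t2 f g)"
    and "tensor_map s1 s2 t1 t2 f g (t1 a b) = t2 (f a) (g b)"
proof -
  from T2 have "vector_space s2" "\<And>w. Vector_Spaces.linear sV2 s2 (\<lambda>v. t2 v w)"
      "\<And>v. Vector_Spaces.linear sW2 s2 (t2 v)" unfolding is_tensor_def by auto
  note th = tensor_the[OF T1 this(1), of "\<lambda>a b. t2 (f a) (g b)", OF lin_comp[OF f this(2)] lin_comp[OF g this(3)]]
  then show "Vector_Spaces.linear s1 s2 (tensor_map s1 s2 t1 t2 f g)"
    and "tensor_map s1 s2 t1 t2 f g (t1 a b) = t2 (f a) (g b)"
    unfolding tensor_map_def by auto
qed

lemma tmult:
  assumes T: "is_tensor sA sA sT t"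
    and m1: "\<And>y. Vector_Spaces.linear sA sA (\<lambda>x. m x y)" and m2: "\<And>x. Vector_Spaces.linear sA sA (m x)"
  shows "Vector_Spaces.linear sT sA (tensor_mult sT sA t m)"
    and "tensor_mult sT sA t m (t a b) = m a b"
  using tensor_the[OF T lin_vs1[OF m2] m1 m2] unfolding tensor_mult_def by auto

lemma tensor_lins:
  assumes "is_tensor sV sW sT t"
  shows "vector_space sV" "vector_space sW" "vector_space sT"
    "\<And>w. Vector_Spaces.linear sV sT (\<lambda>v. t v w)" "\<And>v. Vector_Spaces.linear sW sT (t v)"
    "module.span sT {t v w |v w. True} = UNIV"
  using assms unfolding is_tensor_def by auto

lemma tmap_lin_right:
  assumes T1: "is_tensor sV1 sW1 s1 t1" and T2: "is_tensor sV2 sW2 s2 t2"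
    and f: "Vector_Spaces.linear sV1 sV2 f" and G1: "\<And>y. Vector_Spaces.linear sW1 sW2 (G y)"
    and G2: "\<And>w. Vector_Spaces.linear sY sW2 (\<lambda>y. G y w)"
  shows "Vector_Spaces.linear sY s2 (\<lambda>y. tensor_map s1 s2 t1 t2 f (G y) z)"
proof -
  note tm = tmap[OF T1 T2 f G1]
  note L = tensor_lins[OF T2]
  have add: "tensor_map s1 s2 t1 t2 f (G (y1 + y2)) = (\<lambda>z. tensor_map s1 s2 t1 t2 f (G y1) z + tensor_map s1 s2 t1 t2 f (G y2) z)" for y1 y2
    by (rule tensor_ext[OF T1 tm(1) lin_addf[OF tm(1) tm(1)]]) (simp add: tm(2) lin_add[OF G2] lin_add[OF L(5)])
  have sc: "tensor_map s1 s2 t1 t2 f (G (sY c y)) = (\<lambda>z. s2 c (tensor_map s1 s2 t1 t2 f (G y) z))" for c y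
    by (rule tensor_ext[OF T1 tm(1) lin_scalef[OF tm(1)]]) (simp add: tm(2) lin_scale[OF G2] lin_scale[OF L(5)])
  show ?thesis
    by (rule linI[OF lin_vs1[OF G2] L(3)]) (simp_all add: add sc)
qed

lemma tmap_lin_left:
  assumes T1: "is_tensor sV1 sW1 s1 t1" and T2: "is_tensor sV2 sW2 s2 t2"
    and g: "Vector_Spaces.linear sW1 sW2 g" and F1: "\<And>y. Vector_Spaces.linear sV1 sV2 (F y)"
    and F2: "\<And>w. Vector_Spaces.linear sY sV2 (\<lambda>y. F y w)"
  shows "Vector_Spaces.linear sY s2 (\<lambda>y. tensor_map s1 s2 t1 t2 (F y) g z)"
proof -
  note tm = tmap[OF T1 T2 F1 g]
  note L = tensor_lins[OF T2]
  have add: "tensor_map s1 s2 t1 t2 (F (y1 + y2)) g = (\<lambda>z. tensor_map s1 s2 t1 t2 (F y1) g z + tensor_map s1 s2 t1 t2 (F y2) g z)" for y1 y2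
    by (rule tensor_ext[OF T1 tm(1) lin_addf[OF tm(1) tm(1)]]) (simp add: tm(2) lin_add[OF F2] lin_add[OF L(4)])
  have sc: "tensor_map s1 s2 t1 t2 (F (sY c y)) g = (\<lambda>z. s2 c (tensor_map s1 s2 t1 t2 (F y) g z))" for c y
    by (rule tensor_ext[OF T1 tm(1) lin_scalef[OF tm(1)]]) (simp add: tm(2) lin_scale[OF F2] lin_scale[OF L(4)])
  show ?thesis
    by (rule linI[OF lin_vs1[OF F2] L(3)]) (simp_all add: add sc)
qed

lemma transpose_ex:
  fixes sP :: "'k::field \<Rightarrow> 'p::ab_group_add \<Rightarrow> 'p"
  assumes T1: "is_tensor sV1 sW1 sT1 t1" and T2: "is_tensor sV2 sW2 sT2 t2"
    and P: "is_tensor sT1 sT2 sP tP" and X: "vector_space sX"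
    and P1: "\<And>a' b b'. Vector_Spaces.linear sV1 sX (\<lambda>a. \<Phi> a a' b b')"
    and P2: "\<And>a b b'. Vector_Spaces.linear sW1 sX (\<lambda>a'. \<Phi> a a' b b')"
    and P3: "\<And>a a' b'. Vector_Spaces.linear sV2 sX (\<lambda>b. \<Phi> a a' b b')"
    and P4: "\<And>a a' b. Vector_Spaces.linear sW2 sX (\<lambda>b'. \<Phi> a a' b b')"
  shows "\<exists>h. Vector_Spaces.linear sP sX h \<and> (\<forall>a a' b b'. h (tP (t1 a a') (t2 b b')) = \<Phi> a a' b b')"
proof -
  define g where "g a a' = (THE h. Vector_Spaces.linear sT2 sX h \<and> (\<forall>b b'. h (t2 b b') = \<Phi> a a' b b'))" for a a'
  have g: "Vector_Spaces.linear sT2 sX (g a a')" "g a a' (t2 b b') = \<Phi> a a' b b'" for a a' b b'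
    using tensor_the[OF T2 X P3 P4, of a a'] unfolding g_def by auto
  have gl1: "Vector_Spaces.linear sV1 sX (\<lambda>a. g a a' w)" for a' w
  proof -
    have add: "g (a1 + a2) a' = (\<lambda>w. g a1 a' w + g a2 a' w)" for a1 a2
      by (rule tensor_ext[OF T2 g(1) lin_addf[OF g(1) g(1)]]) (simp add: g(2) lin_add[OF P1])
    have sc: "g (sV1 c a) a' = (\<lambda>w. sX c (g a a' w))" for c a
      by (rule tensor_ext[OF T2 g(1) lin_scalef[OF g(1)]]) (simp add: g(2) lin_scale[OF P1])
    show ?thesis by (rule linI[OF lin_vs1[OF P1] X]) (simp_all add: add sc)
  qed
  have gl2: "Vector_Spaces.linear sW1 sX (\<lambda>a'. g a a' w)" for a w
  proof -
    have add: "g a (a1 + a2) = (\<lambda>w. g a a1 w + g a a2 w)" for a1 a2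
      by (rule tensor_ext[OF T2 g(1) lin_addf[OF g(1) g(1)]]) (simp add: g(2) lin_add[OF P2])
    have sc: "g a (sW1 c a') = (\<lambda>w. sX c (g a a' w))" for c a'
      by (rule tensor_ext[OF T2 g(1) lin_scalef[OF g(1)]]) (simp add: g(2) lin_scale[OF P2])
    show ?thesis by (rule linI[OF lin_vs1[OF P2] X]) (simp_all add: add sc)
  qed
  define k where "k w = (THE h. Vector_Spaces.linear sT1 sX h \<and> (\<forall>a a'. h (t1 a a') = g a a' w))" for w
  have k: "Vector_Spaces.linear sT1 sX (k w)" "k w (t1 a a') = g a a' w" for w a a'
    using tensor_the[OF T1 X gl1 gl2, of w] unfolding k_def by auto
  have kl: "Vector_Spaces.linear sT2 sX (\<lambda>w. k w u)" for u
  proof -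
    have add: "k (w1 + w2) = (\<lambda>u. k w1 u + k w2 u)" for w1 w2
      by (rule tensor_ext[OF T1 k(1) lin_addf[OF k(1) k(1)]]) (simp add: k(2) lin_add[OF g(1)])
    have sc: "k (sT2 c w) = (\<lambda>u. sX c (k w u))" for c w
      by (rule tensor_ext[OF T1 k(1) lin_scalef[OF k(1)]]) (simp add: k(2) lin_scale[OF g(1)])
    show ?thesis by (rule linI[OF tensor_lins(3)[OF T2] X]) (simp_all add: add sc)
  qed
  obtain h where h: "Vector_Spaces.linear sP sX h" "\<And>u w. h (tP u w) = k w u"
    using tensor_univ[OF P X, of "\<lambda>u w. k w u"] k(1) kl by blast
  show ?thesis using h k(2) g(2) by auto
qed

lemma transpose_uniq:
  assumes T1: "is_tensor sV1 sW1 sT1 t1" and T2: "is_tensor sV2 sW2 sT2 t2"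
    and P: "is_tensor sT1 sT2 sP tP"
    and h1: "Vector_Spaces.linear sP sX h1" and h2: "Vector_Spaces.linear sP sX h2"
    and eq: "\<And>a a' b b'. h1 (tP (t1 a a') (t2 b b')) = h2 (tP (t1 a a') (t2 b b'))"
  shows "h1 = h2"
proof (rule tensor_ext[OF P h1 h2])
  note LP = tensor_lins[OF P]
  fix u w
  show "h1 (tP u w) = h2 (tP u w)"
    by (rule bilin_ext[OF tensor_lins(6)[OF T1] tensor_lins(6)[OF T2], where ?p1.0="\<lambda>u w. h1 (tP u w)" and ?p2.0="\<lambda>u w. h2 (tP u w)"])
      (auto intro: lin_comp[OF LP(4) h1] lin_comp[OF LP(5) h1] lin_comp[OF LP(4) h2] lin_comp[OF LP(5) h2] simp: eq)
qed

lemma ttrans: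
  assumes TA: "is_tensor sA sA sAA tA" and TB: "is_tensor sB sB sBB tB"
    and P: "is_tensor sAA sBB sP tP" and D: "is_tensor sA sB sD tD" and DD: "is_tensor sD sD sDD tDD"
  shows "Vector_Spaces.linear sP sDD (tensor_transpose sP sDD tP tA tB tD tDD)"
    and "tensor_transpose sP sDD tP tA tB tD tDD (tP (tA a a') (tB b b')) = tDD (tD a b) (tD a' b')"
proof -
  note LD = tensor_lins[OF D] and LDD = tensor_lins[OF DD]
  obtain h where h: "Vector_Spaces.linear sP sDD h" "\<forall>a a' b b'. h (tP (tA a a') (tB b b')) = tDD (tD a b) (tD a' b')"
    using transpose_ex[OF TA TB P LDD(3), of "\<lambda>a a' b b'. tDD (tD a b) (tD a' b')",
      OF lin_comp[OF LD(4) LDD(4)] lin_comp[OF LD(4) LDD(5)] lin_comp[OF LD(5) LDD(4)] lin_comp[OF LD(5) LDD(5)]]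
    by blast
  have "\<exists>!h. Vector_Spaces.linear sP sDD h \<and> (\<forall>a a' b b'. h (tP (tA a a') (tB b b')) = tDD (tD a b) (tD a' b'))"
  proof (rule ex1I[of _ h])
    show "Vector_Spaces.linear sP sDD h \<and> (\<forall>a a' b b'. h (tP (tA a a') (tB b b')) = tDD (tD a b) (tD a' b'))" using h by blast
    fix g assume "Vector_Spaces.linear sP sDD g \<and> (\<forall>a a' b b'. g (tP (tA a a') (tB b b')) = tDD (tD a b) (tD a' b'))"
    then show "g = h" using transpose_uniq[OF TA TB P _ h(1)] h(2) by auto
  qed
  from theI'[OF this] show "Vector_Spaces.linear sP sDD (tensor_transpose sP sDD tP tA tB tD tDD)"
    and "tensor_transpose sP sDD tP tA tB tD tDD (tP (tA a a') (tB b b')) = tDD (tD a b) (tD a' b')"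
    unfolding tensor_transpose_def by auto
qed



lemma kalg_lins:
  assumes "kalg s m u"
  shows "\<And>y. Vector_Spaces.linear s s (\<lambda>x. m x y)" "\<And>x. Vector_Spaces.linear s s (m x)"
  using assms unfolding kalg_def by auto

lemma nnf_facts:
  assumes "normalized_nearly_frobenius sA m sT t \<Delta>"
  shows "Vector_Spaces.linear sA sT \<Delta>"
    "\<And>a b. \<Delta> (m a b) = tensor_map sT sT t t id (\<lambda>y. m y b) (\<Delta> a)"
    "\<And>a b. \<Delta> (m a b) = tensor_map sT sT t t (m a) id (\<Delta> b)"
    "\<And>a. tensor_mult sT sA t m (\<Delta> a) = a"
  using assms unfolding normalized_nearly_frobenius_def nearly_frobenius_def by auto

lemma part2:
  fixes sA :: "'k::field \<Rightarrow> 'a::ab_group_add \<Rightarrow> 'a" and mA :: "'a \<Rightarrow> 'a \<Rightarrow> 'a" and oneA :: 'a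
    and sB :: "'k \<Rightarrow> 'b::ab_group_add \<Rightarrow> 'b" and mB :: "'b \<Rightarrow> 'b \<Rightarrow> 'b" and oneB :: 'b
    and sAA :: "'k \<Rightarrow> 'aa::ab_group_add \<Rightarrow> 'aa" and tA :: "'a \<Rightarrow> 'a \<Rightarrow> 'aa" and \<Delta>A :: "'a \<Rightarrow> 'aa"
    and sBB :: "'k \<Rightarrow> 'bb::ab_group_add \<Rightarrow> 'bb" and tB :: "'b \<Rightarrow> 'b \<Rightarrow> 'bb" and \<Delta>B :: "'b \<Rightarrow> 'bb"
    and sD :: "'k \<Rightarrow> 'd::ab_group_add \<Rightarrow> 'd" and tD :: "'a \<Rightarrow> 'b \<Rightarrow> 'd"
    and mD :: "'d \<Rightarrow> 'd \<Rightarrow> 'd"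
    and sDD :: "'k \<Rightarrow> 'dd::ab_group_add \<Rightarrow> 'dd" and tDD :: "'d \<Rightarrow> 'd \<Rightarrow> 'dd"
    and sP :: "'k \<Rightarrow> 'p::ab_group_add \<Rightarrow> 'p" and tP :: "'aa \<Rightarrow> 'bb \<Rightarrow> 'p"
  assumes algA: "kalg sA mA oneA" and algB: "kalg sB mB oneB"
    and tensAA: "is_tensor sA sA sAA tA" and tensBB: "is_tensor sB sB sBB tB"
    and DeltaA: "normalized_nearly_frobenius sA mA sAA tA \<Delta>A"
    and DeltaB: "normalized_nearly_frobenius sB mB sBB tB \<Delta>B"
    and tensD: "is_tensor sA sB sD tD"
    and mD1: "\<And>x. Vector_Spaces.linear sD sD (mD x)" and mD2: "\<And>y. Vector_Spaces.linear sD sD (\<lambda>x. mD x y)"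
    and mD_tensor: "\<And>a b a' b'. mD (tD a b) (tD a' b') = tD (mA a a') (mB b b')"
    and tensDD: "is_tensor sD sD sDD tDD"
    and tensP: "is_tensor sAA sBB sP tP"
  shows "normalized_nearly_frobenius sD mD sDD tDD
           (tensor_transpose sP sDD tP tA tB tD tDD \<circ> tensor_map sD sP tD tP \<Delta>A \<Delta>B)"
proof -
  note mA = kalg_lins[OF algA] and mB = kalg_lins[OF algB]
  note DA = nnf_facts[OF DeltaA] and DB = nnf_facts[OF DeltaB]
  note LA = tensor_lins[OF tensAA] and LB = tensor_lins[OF tensBB] and LD = tensor_lins[OF tensD]
    and LDD = tensor_lins[OF tensDD] and LP = tensor_lins[OF tensP]
  define TM where "TM = tensor_map sD sP tD tP \<Delta>A \<Delta>B"
  define \<tau> where "\<tau> = tensor_transpose sP sDD tP tA tB tD tDD"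
  have TM: "Vector_Spaces.linear sD sP TM" "\<And>a b. TM (tD a b) = tP (\<Delta>A a) (\<Delta>B b)"
    unfolding TM_def using tmap[OF tensD tensP DA(1) DB(1)] by auto
  have tau: "Vector_Spaces.linear sP sDD \<tau>" "\<And>a a' b b'. \<tau> (tP (tA a a') (tB b b')) = tDD (tD a b) (tD a' b')"
    unfolding \<tau>_def using ttrans[OF tensAA tensBB tensP tensD tensDD] by auto
  define \<Delta> where "\<Delta> x = \<tau> (TM x)" for x
  have Dl: "Vector_Spaces.linear sD sDD \<Delta>" unfolding \<Delta>_def by (rule lin_comp[OF TM(1) tau(1)])
  define RA where "RA b = tensor_map sAA sAA tA tA id (\<lambda>y. mA y b)" for b
  have RA: "Vector_Spaces.linear sAA sAA (RA b)" "\<And>x x'. RA b (tA x x') = tA x (mA x' b)" for b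
    unfolding RA_def using tmap[OF tensAA tensAA lin_id'[OF LA(1)] mA(1)] by auto
  define RB where "RB b = tensor_map sBB sBB tB tB id (\<lambda>y. mB y b)" for b
  have RB: "Vector_Spaces.linear sBB sBB (RB b)" "\<And>x x'. RB b (tB x x') = tB x (mB x' b)" for b
    unfolding RB_def using tmap[OF tensBB tensBB lin_id'[OF LB(1)] mB(1)] by auto
  define R where "R y = tensor_map sDD sDD tDD tDD id (\<lambda>z. mD z y)" for y
  have R: "Vector_Spaces.linear sDD sDD (R y)" "\<And>p q. R y (tDD p q) = tDD p (mD q y)" for y
    unfolding R_def using tmap[OF tensDD tensDD lin_id'[OF LD(3)] mD2] by auto
  have Ry: "Vector_Spaces.linear sD sDD (\<lambda>y. R y z)" for z
    unfolding R_def by (rule tmap_lin_right[OF tensDD tensDD lin_id'[OF LD(3)] mD2 mD1])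
  define LA' where "LA' a = tensor_map sAA sAA tA tA (mA a) id" for a
  have LA': "Vector_Spaces.linear sAA sAA (LA' a)" "\<And>x x'. LA' a (tA x x') = tA (mA a x) x'" for a
    unfolding LA'_def using tmap[OF tensAA tensAA mA(2) lin_id'[OF LA(1)]] by auto
  define LB' where "LB' a = tensor_map sBB sBB tB tB (mB a) id" for a
  have LB': "Vector_Spaces.linear sBB sBB (LB' a)" "\<And>x x'. LB' a (tB x x') = tB (mB a x) x'" for a
    unfolding LB'_def using tmap[OF tensBB tensBB mB(2) lin_id'[OF LB(1)]] by auto
  define L where "L y = tensor_map sDD sDD tDD tDD (mD y) id" for y
  have L: "Vector_Spaces.linear sDD sDD (L y)" "\<And>p q. L y (tDD p q) = tDD (mD y p) q" for y
    unfolding L_def using tmap[OF tensDD tensDD mD1 lin_id'[OF LD(3)]] by auto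
  have Ly: "Vector_Spaces.linear sD sDD (\<lambda>y. L y z)" for z
    unfolding L_def by (rule tmap_lin_left[OF tensDD tensDD lin_id'[OF LD(3)] mD1 mD2])
  have K1: "\<tau> (tP (RA a' u) (RB b' v)) = R (tD a' b') (\<tau> (tP u v))" for a' b' u v
  proof (rule bilin_ext[OF LA(6) LB(6), where ?p1.0="\<lambda>u v. \<tau> (tP (RA a' u) (RB b' v))"
        and ?p2.0="\<lambda>u v. R (tD a' b') (\<tau> (tP u v))"])
    show "Vector_Spaces.linear sAA sDD (\<lambda>u. \<tau> (tP (RA a' u) (RB b' v)))" for v
      by (rule lin_comp[OF lin_comp[OF RA(1) LP(4)] tau(1)])
    show "Vector_Spaces.linear sBB sDD (\<lambda>v. \<tau> (tP (RA a' u) (RB b' v)))" for u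
      by (rule lin_comp[OF lin_comp[OF RB(1) LP(5)] tau(1)])
    show "Vector_Spaces.linear sAA sDD (\<lambda>u. R (tD a' b') (\<tau> (tP u v)))" for v
      by (rule lin_comp[OF lin_comp[OF LP(4) tau(1)] R(1)])
    show "Vector_Spaces.linear sBB sDD (\<lambda>v. R (tD a' b') (\<tau> (tP u v)))" for u
      by (rule lin_comp[OF lin_comp[OF LP(5) tau(1)] R(1)])
    fix x y assume "x \<in> {tA v w |v w. True}" "y \<in> {tB v w |v w. True}"
    then show "\<tau> (tP (RA a' x) (RB b' y)) = R (tD a' b') (\<tau> (tP x y))"
      by (auto simp: RA(2) RB(2) tau(2) R(2) mD_tensor)
  qed
  have K2: "\<tau> (tP (LA' a u) (LB' b v)) = L (tD a b) (\<tau> (tP u v))" for a b u v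
  proof (rule bilin_ext[OF LA(6) LB(6), where ?p1.0="\<lambda>u v. \<tau> (tP (LA' a u) (LB' b v))"
        and ?p2.0="\<lambda>u v. L (tD a b) (\<tau> (tP u v))"])
    show "Vector_Spaces.linear sAA sDD (\<lambda>u. \<tau> (tP (LA' a u) (LB' b v)))" for v
      by (rule lin_comp[OF lin_comp[OF LA'(1) LP(4)] tau(1)])
    show "Vector_Spaces.linear sBB sDD (\<lambda>v. \<tau> (tP (LA' a u) (LB' b v)))" for u
      by (rule lin_comp[OF lin_comp[OF LB'(1) LP(5)] tau(1)])
    show "Vector_Spaces.linear sAA sDD (\<lambda>u. L (tD a b) (\<tau> (tP u v)))" for v
      by (rule lin_comp[OF lin_comp[OF LP(4) tau(1)] L(1)])
    show "Vector_Spaces.linear sBB sDD (\<lambda>v. L (tD a b) (\<tau> (tP u v)))" for u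
      by (rule lin_comp[OF lin_comp[OF LP(5) tau(1)] L(1)])
    fix x y assume "x \<in> {tA v w |v w. True}" "y \<in> {tB v w |v w. True}"
    then show "\<tau> (tP (LA' a x) (LB' b y)) = L (tD a b) (\<tau> (tP x y))"
      by (auto simp: LA'(2) LB'(2) tau(2) L(2) mD_tensor)
  qed
  have C1: "\<Delta> (mD x y) = R y (\<Delta> x)" for x y
  proof (rule bilin_ext[OF LD(6) LD(6), where ?p1.0="\<lambda>x y. \<Delta> (mD x y)" and ?p2.0="\<lambda>x y. R y (\<Delta> x)"])
    show "Vector_Spaces.linear sD sDD (\<lambda>x. \<Delta> (mD x y))" for y by (rule lin_comp[OF mD2 Dl])
    show "Vector_Spaces.linear sD sDD (\<lambda>y. \<Delta> (mD x y))" for x by (rule lin_comp[OF mD1 Dl])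
    show "Vector_Spaces.linear sD sDD (\<lambda>x. R y (\<Delta> x))" for y by (rule lin_comp[OF Dl R(1)])
    show "Vector_Spaces.linear sD sDD (\<lambda>y. R y (\<Delta> x))" for x by (rule Ry)
    fix x y assume "x \<in> {tD v w |v w. True}" "y \<in> {tD v w |v w. True}"
    then obtain a b a' b' where xy: "x = tD a b" "y = tD a' b'" by auto
    have "\<Delta> (mD x y) = \<tau> (tP (\<Delta>A (mA a a')) (\<Delta>B (mB b b')))"
      by (simp add: xy mD_tensor \<Delta>_def TM(2))
    also have "\<dots> = \<tau> (tP (RA a' (\<Delta>A a)) (RB b' (\<Delta>B b)))"
      by (simp add: DA(2) DB(2) RA_def RB_def)
    also have "\<dots> = R y (\<Delta> x)" by (simp add: K1 xy \<Delta>_def TM(2))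
    finally show "\<Delta> (mD x y) = R y (\<Delta> x)" .
  qed
  have C2: "\<Delta> (mD x y) = L x (\<Delta> y)" for x y
  proof (rule bilin_ext[OF LD(6) LD(6), where ?p1.0="\<lambda>x y. \<Delta> (mD x y)" and ?p2.0="\<lambda>x y. L x (\<Delta> y)"])
    show "Vector_Spaces.linear sD sDD (\<lambda>x. \<Delta> (mD x y))" for y by (rule lin_comp[OF mD2 Dl])
    show "Vector_Spaces.linear sD sDD (\<lambda>y. \<Delta> (mD x y))" for x by (rule lin_comp[OF mD1 Dl])
    show "Vector_Spaces.linear sD sDD (\<lambda>x. L x (\<Delta> y))" for y by (rule Ly)
    show "Vector_Spaces.linear sD sDD (\<lambda>y. L x (\<Delta> y))" for x by (rule lin_comp[OF Dl L(1)])
    fix x y assume "x \<in> {tD v w |v w. True}" "y \<in> {tD v w |v w. True}"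
    then obtain a b a' b' where xy: "x = tD a b" "y = tD a' b'" by auto
    have "\<Delta> (mD x y) = \<tau> (tP (\<Delta>A (mA a a')) (\<Delta>B (mB b b')))"
      by (simp add: xy mD_tensor \<Delta>_def TM(2))
    also have "\<dots> = \<tau> (tP (LA' a (\<Delta>A a')) (LB' b (\<Delta>B b')))"
      by (simp add: DA(3) DB(3) LA'_def LB'_def)
    also have "\<dots> = L x (\<Delta> y)" by (simp add: K2 xy \<Delta>_def TM(2))
    finally show "\<Delta> (mD x y) = L x (\<Delta> y)" .
  qed
  define MD where "MD = tensor_mult sDD sD tDD mD"
  have MD: "Vector_Spaces.linear sDD sD MD" "\<And>p q. MD (tDD p q) = mD p q"
    unfolding MD_def using tmult[OF tensDD mD2 mD1] by auto
  define MA where "MA = tensor_mult sAA sA tA mA"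
  have MA: "Vector_Spaces.linear sAA sA MA" "\<And>p q. MA (tA p q) = mA p q"
    unfolding MA_def using tmult[OF tensAA mA(1) mA(2)] by auto
  define MB where "MB = tensor_mult sBB sB tB mB"
  have MB: "Vector_Spaces.linear sBB sB MB" "\<And>p q. MB (tB p q) = mB p q"
    unfolding MB_def using tmult[OF tensBB mB(1) mB(2)] by auto
  have K3: "MD (\<tau> (tP u v)) = tD (MA u) (MB v)" for u v
  proof (rule bilin_ext[OF LA(6) LB(6), where ?p1.0="\<lambda>u v. MD (\<tau> (tP u v))" and ?p2.0="\<lambda>u v. tD (MA u) (MB v)"])
    show "Vector_Spaces.linear sAA sD (\<lambda>u. MD (\<tau> (tP u v)))" for v
      by (rule lin_comp[OF lin_comp[OF LP(4) tau(1)] MD(1)])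
    show "Vector_Spaces.linear sBB sD (\<lambda>v. MD (\<tau> (tP u v)))" for u
      by (rule lin_comp[OF lin_comp[OF LP(5) tau(1)] MD(1)])
    show "Vector_Spaces.linear sAA sD (\<lambda>u. tD (MA u) (MB v))" for v
      by (rule lin_comp[OF MA(1) LD(4)])
    show "Vector_Spaces.linear sBB sD (\<lambda>v. tD (MA u) (MB v))" for u
      by (rule lin_comp[OF MB(1) LD(5)])
    fix x y assume "x \<in> {tA v w |v w. True}" "y \<in> {tB v w |v w. True}"
    then show "MD (\<tau> (tP x y)) = tD (MA x) (MB y)"
      by (auto simp: tau(2) MD(2) MA(2) MB(2) mD_tensor)
  qed
  have N: "(\<lambda>x. MD (\<Delta> x)) = (\<lambda>x. x)"
  proof (rule lin_eq_span[OF lin_comp[OF Dl MD(1)] lin_id[OF LD(3)] LD(6)])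
    fix x assume "x \<in> {tD v w |v w. True}"
    then obtain a b where "x = tD a b" by auto
    then show "MD (\<Delta> x) = x"
      using DA(4)[of a] DB(4)[of b] by (simp add: \<Delta>_def TM(2) K3 MA_def MB_def)
  qed
  have "normalized_nearly_frobenius sD mD sDD tDD \<Delta>"
    unfolding normalized_nearly_frobenius_def nearly_frobenius_def
    using Dl C1 C2 fun_cong[OF N] by (auto simp: R_def L_def MD_def)
  moreover have "\<Delta> = \<tau> \<circ> TM" by (auto simp: \<Delta>_def)
  ultimately show ?thesis by (simp add: \<tau>_def TM_def)
qed



lemma part1:
  fixes sA :: "'k::field \<Rightarrow> 'a::ab_group_add \<Rightarrow> 'a" and mA :: "'a \<Rightarrow> 'a \<Rightarrow> 'a" and oneA :: 'a
    and sB :: "'k \<Rightarrow> 'b::ab_group_add \<Rightarrow> 'b" and mB :: "'b \<Rightarrow> 'b \<Rightarrow> 'b" and oneB :: 'b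
    and sAA :: "'k \<Rightarrow> 'aa::ab_group_add \<Rightarrow> 'aa" and tA :: "'a \<Rightarrow> 'a \<Rightarrow> 'aa" and \<Delta>A :: "'a \<Rightarrow> 'aa"
    and sBB :: "'k \<Rightarrow> 'bb::ab_group_add \<Rightarrow> 'bb" and tB :: "'b \<Rightarrow> 'b \<Rightarrow> 'bb" and \<Delta>B :: "'b \<Rightarrow> 'bb"
    and sCC :: "'k \<Rightarrow> 'cc::ab_group_add \<Rightarrow> 'cc" and tC :: "'a \<times> 'b \<Rightarrow> 'a \<times> 'b \<Rightarrow> 'cc"
  assumes algA: "kalg sA mA oneA" and algB: "kalg sB mB oneB"
    and tensAA: "is_tensor sA sA sAA tA" and tensBB: "is_tensor sB sB sBB tB"
    and DeltaA: "normalized_nearly_frobenius sA mA sAA tA \<Delta>A"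
    and DeltaB: "normalized_nearly_frobenius sB mB sBB tB \<Delta>B"
    and tensCC: "is_tensor (prod_scale sA sB) (prod_scale sA sB) sCC tC"
  shows "\<exists>\<Delta>C. normalized_nearly_frobenius (prod_scale sA sB) (prod_mult mA mB) sCC tC \<Delta>C
            \<and> \<Delta>C (oneA, oneB) =
                tensor_map sAA sCC tA tC (\<lambda>a. (a, 0)) (\<lambda>a. (a, 0)) (\<Delta>A oneA)
              + tensor_map sBB sCC tB tC (\<lambda>b. (0, b)) (\<lambda>b. (0, b)) (\<Delta>B oneB)"
proof -
  note mA = kalg_lins[OF algA] and mB = kalg_lins[OF algB]
  note DA = nnf_facts[OF DeltaA] and DB = nnf_facts[OF DeltaB]
  note LA = tensor_lins[OF tensAA] and LB = tensor_lins[OF tensBB] and LC = tensor_lins[OF tensCC]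
  define sC where "sC = prod_scale sA sB"
  define mC where "mC = prod_mult mA mB"
  have vA: "vector_space sA" and vB: "vector_space sB" using LA LB by auto
  have vC: "vector_space sC" using LC(1) by (simp add: sC_def)
  have iA: "Vector_Spaces.linear sA sC (\<lambda>a. (a, 0))"
    by (rule linI[OF vA vC]) (simp_all add: sC_def prod_scale_def vs_zero[OF vB])
  have iB: "Vector_Spaces.linear sB sC (\<lambda>b. (0, b))"
    by (rule linI[OF vB vC]) (simp_all add: sC_def prod_scale_def vs_zero[OF vA])
  have mC1: "Vector_Spaces.linear sC sC (\<lambda>p. mC p q)" for q
    by (rule linI[OF vC vC]) (simp_all add: mC_def sC_def prod_mult_def prod_scale_def
        lin_add[OF mA(1)] lin_add[OF mB(1)] lin_scale[OF mA(1)] lin_scale[OF mB(1)])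
  have mC2: "Vector_Spaces.linear sC sC (mC p)" for p
    by (rule linI[OF vC vC]) (simp_all add: mC_def sC_def prod_mult_def prod_scale_def
        lin_add[OF mA(2)] lin_add[OF mB(2)] lin_scale[OF mA(2)] lin_scale[OF mB(2)])
  have mA0: "mA 0 x = 0" "mA x 0 = 0" for x using lin_zero[OF mA(1)] lin_zero[OF mA(2)] by auto
  have mB0: "mB 0 x = 0" "mB x 0 = 0" for x using lin_zero[OF mB(1)] lin_zero[OF mB(2)] by auto
  define IA where "IA = tensor_map sAA sCC tA tC (\<lambda>a. (a, 0)) (\<lambda>a. (a, 0))"
  have IA: "Vector_Spaces.linear sAA sCC IA" "\<And>x x'. IA (tA x x') = tC (x, 0) (x', 0)"
    unfolding IA_def using tmap[OF tensAA tensCC[folded sC_def] iA iA] by auto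
  define IB where "IB = tensor_map sBB sCC tB tC (\<lambda>b. (0, b)) (\<lambda>b. (0, b))"
  have IB: "Vector_Spaces.linear sBB sCC IB" "\<And>x x'. IB (tB x x') = tC (0, x) (0, x')"
    unfolding IB_def using tmap[OF tensBB tensCC[folded sC_def] iB iB] by auto
  define \<Delta> where "\<Delta> p = IA (\<Delta>A (fst p)) + IB (\<Delta>B (snd p))" for p
  have Dl: "Vector_Spaces.linear sC sCC \<Delta>"
    by (rule linI[OF vC LC(3)]) (simp_all add: \<Delta>_def sC_def prod_scale_def lin_add[OF DA(1)]
        lin_add[OF DB(1)] lin_add[OF IA(1)] lin_add[OF IB(1)] lin_scale[OF DA(1)] lin_scale[OF DB(1)]
        lin_scale[OF IA(1)] lin_scale[OF IB(1)] vs_add[OF LC(3)] add_ac)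
  define RA where "RA b = tensor_map sAA sAA tA tA id (\<lambda>y. mA y b)" for b
  have RA: "Vector_Spaces.linear sAA sAA (RA b)" "\<And>x x'. RA b (tA x x') = tA x (mA x' b)" for b
    unfolding RA_def using tmap[OF tensAA tensAA lin_id'[OF LA(1)] mA(1)] by auto
  define RB where "RB b = tensor_map sBB sBB tB tB id (\<lambda>y. mB y b)" for b
  have RB: "Vector_Spaces.linear sBB sBB (RB b)" "\<And>x x'. RB b (tB x x') = tB x (mB x' b)" for b
    unfolding RB_def using tmap[OF tensBB tensBB lin_id'[OF LB(1)] mB(1)] by auto
  define LA' where "LA' a = tensor_map sAA sAA tA tA (mA a) id" for a
  have LA': "Vector_Spaces.linear sAA sAA (LA' a)" "\<And>x x'. LA' a (tA x x') = tA (mA a x) x'" for a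
    unfolding LA'_def using tmap[OF tensAA tensAA mA(2) lin_id'[OF LA(1)]] by auto
  define LB' where "LB' a = tensor_map sBB sBB tB tB (mB a) id" for a
  have LB': "Vector_Spaces.linear sBB sBB (LB' a)" "\<And>x x'. LB' a (tB x x') = tB (mB a x) x'" for a
    unfolding LB'_def using tmap[OF tensBB tensBB mB(2) lin_id'[OF LB(1)]] by auto
  define R where "R q = tensor_map sCC sCC tC tC id (\<lambda>y. mC y q)" for q
  have R: "Vector_Spaces.linear sCC sCC (R q)" "\<And>x x'. R q (tC x x') = tC x (mC x' q)" for q
    unfolding R_def using tmap[OF tensCC[folded sC_def] tensCC[folded sC_def] lin_id'[OF vC] mC1] by auto
  define L where "L q = tensor_map sCC sCC tC tC (mC q) id" for q
  have L: "Vector_Spaces.linear sCC sCC (L q)" "\<And>x x'. L q (tC x x') = tC (mC q x) x'" for q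
    unfolding L_def using tmap[OF tensCC[folded sC_def] tensCC[folded sC_def] mC2 lin_id'[OF vC]] by auto
  have K1: "IA (RA a' u) = R (a', b') (IA u)" for a' b' u
    using tensor_ext[OF tensAA lin_comp[OF RA(1) IA(1)] lin_comp[OF IA(1) R(1)], of a' "(a', b')"]
    by (simp add: RA(2) IA(2) R(2) mC_def prod_mult_def mB0 fun_eq_iff)
  have K2: "IB (RB b' u) = R (a', b') (IB u)" for a' b' u
    using tensor_ext[OF tensBB lin_comp[OF RB(1) IB(1)] lin_comp[OF IB(1) R(1)], of b' "(a', b')"]
    by (simp add: RB(2) IB(2) R(2) mC_def prod_mult_def mA0 fun_eq_iff)
  have K3: "IA (LA' a u) = L (a, b) (IA u)" for a b u
    using tensor_ext[OF tensAA lin_comp[OF LA'(1) IA(1)] lin_comp[OF IA(1) L(1)], of a "(a, b)"]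
    by (simp add: LA'(2) IA(2) L(2) mC_def prod_mult_def mB0 fun_eq_iff)
  have K4: "IB (LB' b u) = L (a, b) (IB u)" for a b u
    using tensor_ext[OF tensBB lin_comp[OF LB'(1) IB(1)] lin_comp[OF IB(1) L(1)], of b "(a, b)"]
    by (simp add: LB'(2) IB(2) L(2) mC_def prod_mult_def mA0 fun_eq_iff)
  have C1: "\<Delta> (mC p q) = R q (\<Delta> p)" for p q
  proof -
    obtain a b where p: "p = (a, b)" by (cases p)
    obtain a' b' where q: "q = (a', b')" by (cases q)
    have "\<Delta> (mC p q) = IA (RA a' (\<Delta>A a)) + IB (RB b' (\<Delta>B b))"
      by (simp add: p q \<Delta>_def mC_def prod_mult_def DA(2) DB(2) RA_def RB_def)
    also have "\<dots> = R q (\<Delta> p)" using K1[where a'=a' and b'=b' and u="\<Delta>A a"] K2[where a'=a' and b'=b' and u="\<Delta>B b"] by (simp add: q p \<Delta>_def lin_add[OF R(1)])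
    finally show ?thesis .
  qed
  have C2: "\<Delta> (mC p q) = L p (\<Delta> q)" for p q
  proof -
    obtain a b where p: "p = (a, b)" by (cases p)
    obtain a' b' where q: "q = (a', b')" by (cases q)
    have "\<Delta> (mC p q) = IA (LA' a (\<Delta>A a')) + IB (LB' b (\<Delta>B b'))"
      by (simp add: p q \<Delta>_def mC_def prod_mult_def DA(3) DB(3) LA'_def LB'_def)
    also have "\<dots> = L p (\<Delta> q)" using K3[where a=a and b=b and u="\<Delta>A a'"] K4[where a=a and b=b and u="\<Delta>B b'"] by (simp add: q p \<Delta>_def lin_add[OF L(1)])
    finally show ?thesis .
  qed
  define MC where "MC = tensor_mult sCC sC tC mC"
  have MC: "Vector_Spaces.linear sCC sC MC" "\<And>p q. MC (tC p q) = mC p q"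
    unfolding MC_def using tmult[OF tensCC[folded sC_def] mC1 mC2] by auto
  define MA where "MA = tensor_mult sAA sA tA mA"
  have MA: "Vector_Spaces.linear sAA sA MA" "\<And>p q. MA (tA p q) = mA p q"
    unfolding MA_def using tmult[OF tensAA mA(1) mA(2)] by auto
  define MB where "MB = tensor_mult sBB sB tB mB"
  have MB: "Vector_Spaces.linear sBB sB MB" "\<And>p q. MB (tB p q) = mB p q"
    unfolding MB_def using tmult[OF tensBB mB(1) mB(2)] by auto
  have K5: "MC (IA u) = (MA u, 0)" for u
    using tensor_ext[OF tensAA lin_comp[OF IA(1) MC(1)] lin_comp[OF MA(1) iA]]
    by (simp add: IA(2) MC(2) MA(2) mC_def prod_mult_def mB0 fun_eq_iff)
  have K6: "MC (IB u) = (0, MB u)" for u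
    using tensor_ext[OF tensBB lin_comp[OF IB(1) MC(1)] lin_comp[OF MB(1) iB]]
    by (simp add: IB(2) MC(2) MB(2) mC_def prod_mult_def mA0 fun_eq_iff)
  have N: "MC (\<Delta> p) = p" for p
  proof -
    obtain a b where p: "p = (a, b)" by (cases p)
    show ?thesis using DA(4)[of a] DB(4)[of b]
      by (simp add: p \<Delta>_def lin_add[OF MC(1)] K5 K6 MA_def MB_def)
  qed
  have "normalized_nearly_frobenius sC mC sCC tC \<Delta>"
    unfolding normalized_nearly_frobenius_def nearly_frobenius_def
    using Dl C1 C2 N by (auto simp: R_def L_def MC_def)
  moreover have "\<Delta> (oneA, oneB) =
                tensor_map sAA sCC tA tC (\<lambda>a. (a, 0)) (\<lambda>a. (a, 0)) (\<Delta>A oneA)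
              + tensor_map sBB sCC tB tC (\<lambda>b. (0, b)) (\<lambda>b. (0, b)) (\<Delta>B oneB)"
    by (simp add: \<Delta>_def IA_def IB_def)
  ultimately show ?thesis unfolding sC_def mC_def by blast
qed

theorem proposition17:
  fixes sA :: "'k::field \<Rightarrow> 'a::ab_group_add \<Rightarrow> 'a" and mA :: "'a \<Rightarrow> 'a \<Rightarrow> 'a" and oneA :: 'a
    and sB :: "'k \<Rightarrow> 'b::ab_group_add \<Rightarrow> 'b" and mB :: "'b \<Rightarrow> 'b \<Rightarrow> 'b" and oneB :: 'b
    and sAA :: "'k \<Rightarrow> 'aa::ab_group_add \<Rightarrow> 'aa" and tA :: "'a \<Rightarrow> 'a \<Rightarrow> 'aa" and \<Delta>A :: "'a \<Rightarrow> 'aa"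
    and sBB :: "'k \<Rightarrow> 'bb::ab_group_add \<Rightarrow> 'bb" and tB :: "'b \<Rightarrow> 'b \<Rightarrow> 'bb" and \<Delta>B :: "'b \<Rightarrow> 'bb"
    and sCC :: "'k \<Rightarrow> 'cc::ab_group_add \<Rightarrow> 'cc" and tC :: "'a \<times> 'b \<Rightarrow> 'a \<times> 'b \<Rightarrow> 'cc"
    and sD :: "'k \<Rightarrow> 'd::ab_group_add \<Rightarrow> 'd" and tD :: "'a \<Rightarrow> 'b \<Rightarrow> 'd"
    and mD :: "'d \<Rightarrow> 'd \<Rightarrow> 'd" and oneD :: 'd
    and sDD :: "'k \<Rightarrow> 'dd::ab_group_add \<Rightarrow> 'dd" and tDD :: "'d \<Rightarrow> 'd \<Rightarrow> 'dd"
    and sP :: "'k \<Rightarrow> 'p::ab_group_add \<Rightarrow> 'p" and tP :: "'aa \<Rightarrow> 'bb \<Rightarrow> 'p"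
  assumes algA: "kalg sA mA oneA" and algB: "kalg sB mB oneB"
    and tensAA: "is_tensor sA sA sAA tA" and tensBB: "is_tensor sB sB sBB tB"
    and DeltaA: "normalized_nearly_frobenius sA mA sAA tA \<Delta>A"
    and DeltaB: "normalized_nearly_frobenius sB mB sBB tB \<Delta>B"
    and tensCC: "is_tensor (prod_scale sA sB) (prod_scale sA sB) sCC tC"
    and tensD: "is_tensor sA sB sD tD"
    and mD_lin: "\<forall>x. Vector_Spaces.linear sD sD (mD x)" "\<forall>y. Vector_Spaces.linear sD sD (\<lambda>x. mD x y)"
    and mD_tensor: "\<forall>a b a' b'. mD (tD a b) (tD a' b') = tD (mA a a') (mB b b')"
    and oneD: "oneD = tD oneA oneB"
    and tensDD: "is_tensor sD sD sDD tDD"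
    and tensP: "is_tensor sAA sBB sP tP"
  shows "(\<exists>\<Delta>C. normalized_nearly_frobenius (prod_scale sA sB) (prod_mult mA mB) sCC tC \<Delta>C
            \<and> \<Delta>C (oneA, oneB) =
                tensor_map sAA sCC tA tC (\<lambda>a. (a, 0)) (\<lambda>a. (a, 0)) (\<Delta>A oneA)
              + tensor_map sBB sCC tB tC (\<lambda>b. (0, b)) (\<lambda>b. (0, b)) (\<Delta>B oneB))
       \<and> normalized_nearly_frobenius sD mD sDD tDD
           (tensor_transpose sP sDD tP tA tB tD tDD \<circ> tensor_map sD sP tD tP \<Delta>A \<Delta>B)"
  proof
  show "\<exists>\<Delta>C. normalized_nearly_frobenius (prod_scale sA sB) (prod_mult mA mB) sCC tC \<Delta>C
            \<and> \<Delta>C (oneA, oneB) =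
                tensor_map sAA sCC tA tC (\<lambda>a. (a, 0)) (\<lambda>a. (a, 0)) (\<Delta>A oneA)
              + tensor_map sBB sCC tB tC (\<lambda>b. (0, b)) (\<lambda>b. (0, b)) (\<Delta>B oneB)"
    by (rule part1[OF algA algB tensAA tensBB DeltaA DeltaB tensCC])
  show "normalized_nearly_frobenius sD mD sDD tDD
           (tensor_transpose sP sDD tP tA tB tD tDD \<circ> tensor_map sD sP tD tP \<Delta>A \<Delta>B)"
    by (rule part2[OF algA algB tensAA tensBB DeltaA DeltaB tensD _ _ _ tensDD tensP])
      (use mD_lin mD_tensor in auto)
qed

end
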